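(* For each of the Coloring, K-SAT and NAE-K-SAT models, for all positive integers $N,M,m$ and every $0<\delta<1/2$, $$p(N,M+m)\ge\delta^m\,p(N,M)-(2\delta)^{M+1}\exp\big(\mathcal{H}(\delta)N+o(N)\big),$$ where $\mathcal{H}(\delta)=-\delta\log\delta-(1-\delta)\log(1-\delta)$ is the entropy function and the $o(N)$ term depends only on $N$ and $\delta$.
   Context: $\mathbb{G}(N,M)$: random hypergraph on $[N]$ with $M$ directed $K$-hyperedges chosen independently and uniformly from $[N]^K$. $\chi=\{0,\dots,q-1\}$; $H(x)=\sum_{e}H_e(x_e)$, $H(G)=\max_{x\in\chi^N}H(x)$. Models: $q$-Coloring ($K=2$, $H_e(x,y)=\mathbf 1[x\ne y]$); K-SAT ($q=2$, independent uniform $a_e\in\{0,1\}^K$ per hyperedge, $H_e(a_e)=0$, $1$ otherwise); NAE-K-SAT ($q=2$, $H_e(a_e)=H_e(\mathbf1-a_e)=0$, $1$ otherwise). $p(N,M)=\mathbb{P}(H(\mathbb{G}(N,M))=M)$. *)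

theory Defs
  imports "HOL-Library.FuncSet" "HOL-Library.Landau_Symbols" Complex_Main
begin

text \<open>Vertices are 0..N-1, spins/colours are 0..q-1. A directed K-hyperedge is a
map {0..<K} -> {0..<N}; an instance with M hyperedges is a map {0..<M} -> Omega,
where Omega is the (finite) set of possible hyperedges (with their random labels).
Choosing the instance uniformly from this finite set is the same as choosing the
M hyperedges (and labels) independently and uniformly.\<close>

definition hyperedges :: "nat \<Rightarrow> nat \<Rightarrow> (nat \<Rightarrow> nat) set" where
  "hyperedges N K = {0..<K} \<rightarrow>\<^sub>E {0..<N}"

definition configs :: "nat \<Rightarrow> nat \<Rightarrow> (nat \<Rightarrow> nat) set" where
  "configs q N = {0..<N} \<rightarrow>\<^sub>E {0..<q}"

definition Hx :: "('e \<Rightarrow> (nat \<Rightarrow> nat) \<Rightarrow> nat) \<Rightarrow> (nat \<Rightarrow> 'e) \<Rightarrow> nat \<Rightarrow> (nat \<Rightarrow> nat) \<Rightarrow> nat" where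
  "Hx He G M x = (\<Sum>i<M. He (G i) x)"

definition HG :: "('e \<Rightarrow> (nat \<Rightarrow> nat) \<Rightarrow> nat) \<Rightarrow> nat \<Rightarrow> nat \<Rightarrow> (nat \<Rightarrow> 'e) \<Rightarrow> nat \<Rightarrow> nat" where
  "HG He q N G M = Max ((\<lambda>x. Hx He G M x) ` configs q N)"

definition pM :: "'e set \<Rightarrow> ('e \<Rightarrow> (nat \<Rightarrow> nat) \<Rightarrow> nat) \<Rightarrow> nat \<Rightarrow> nat \<Rightarrow> nat \<Rightarrow> real" where
  "pM \<Omega> He q N M =
     real (card {G \<in> {0..<M} \<rightarrow>\<^sub>E \<Omega>. HG He q N G M = M}) / real (card ({0..<M} \<rightarrow>\<^sub>E \<Omega>))"

definition col_He :: "(nat \<Rightarrow> nat) \<Rightarrow> (nat \<Rightarrow> nat) \<Rightarrow> nat" where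
  "col_He e x = (if x (e 0) \<noteq> x (e 1) then 1 else 0)"

definition p_col :: "nat \<Rightarrow> nat \<Rightarrow> nat \<Rightarrow> real" where
  "p_col q N M = pM (hyperedges N 2) col_He q N M"

definition sat_He :: "nat \<Rightarrow> (nat \<Rightarrow> nat) \<times> (nat \<Rightarrow> nat) \<Rightarrow> (nat \<Rightarrow> nat) \<Rightarrow> nat" where
  "sat_He K ea x = (if (\<forall>j<K. x (fst ea j) = snd ea j) then 0 else 1)"

definition p_sat :: "nat \<Rightarrow> nat \<Rightarrow> nat \<Rightarrow> real" where
  "p_sat K N M = pM (hyperedges N K \<times> ({0..<K} \<rightarrow>\<^sub>E {0..<2})) (sat_He K) 2 N M"

definition nae_He :: "nat \<Rightarrow> (nat \<Rightarrow> nat) \<times> (nat \<Rightarrow> nat) \<Rightarrow> (nat \<Rightarrow> nat) \<Rightarrow> nat" where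
  "nae_He K ea x = (if (\<forall>j<K. x (fst ea j) = snd ea j) \<or> (\<forall>j<K. x (fst ea j) = 1 - snd ea j)
                    then 0 else 1)"

definition p_nae :: "nat \<Rightarrow> nat \<Rightarrow> nat \<Rightarrow> real" where
  "p_nae K N M = pM (hyperedges N K \<times> ({0..<K} \<rightarrow>\<^sub>E {0..<2})) (nae_He K) 2 N M"

definition entropy :: "real \<Rightarrow> real" where
  "entropy d = - d * ln d - (1 - d) * ln (1 - d)"

end

theory Submission imports Defs begin

definition satset :: "'e set \<Rightarrow> ('e \<Rightarrow> (nat\<Rightarrow>nat) \<Rightarrow> nat) \<Rightarrow> (nat\<Rightarrow>nat) set \<Rightarrow> nat \<Rightarrow> (nat \<Rightarrow> 'e) set" where
 "satset \<Omega> He X M = {G \<in> {0..<M} \<rightarrow>\<^sub>E \<Omega>. \<exists>x\<in>X. \<forall>i<M. He (G i) x = 1}"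

lemma sum_eq_card_iff:
  fixes f :: "nat \<Rightarrow> nat"
  assumes "\<And>i. f i \<le> 1"
  shows "(\<Sum>i<M. f i) = M \<longleftrightarrow> (\<forall>i<M. f i = 1)"
proof -
  have "(\<Sum>i<M. f i) + (\<Sum>i<M. 1 - f i) = (\<Sum>i<M. f i + (1 - f i))" by (simp add: sum.distrib)
  also have "\<dots> = M" using assms by simp
  finally have e: "(\<Sum>i<M. f i) + (\<Sum>i<M. 1 - f i) = M" .
  have "(\<Sum>i<M. f i) = M \<longleftrightarrow> (\<Sum>i<M. 1 - f i) = 0" using e by linarith
  also have "\<dots> \<longleftrightarrow> (\<forall>i<M. f i = 1)" using assms by (auto simp: le_antisym)
  finally show ?thesis .
qed

lemma Hx_le: assumes "\<And>e x. He e x \<le> 1" shows "Hx He G M x \<le> M"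
proof -
  have "Hx He G M x \<le> (\<Sum>i<M. 1)" unfolding Hx_def by (rule sum_mono) (use assms in auto)
  then show ?thesis by simp
qed

lemma configs_fin: "finite (configs q N)" unfolding configs_def by (simp add: finite_PiE)
lemma configs_ne: "0 < q \<Longrightarrow> configs q N \<noteq> {}" unfolding configs_def
  by (auto simp: PiE_eq_empty_iff)

lemma HG_iff:
  assumes "\<And>e x. He e x \<le> 1" "0 < q"
  shows "HG He q N G M = M \<longleftrightarrow> (\<exists>x\<in>configs q N. \<forall>i<M. He (G i) x = 1)"
proof -
  have "HG He q N G M = M \<longleftrightarrow> (\<exists>x\<in>configs q N. Hx He G M x = M)"
  proof -
    have le: "\<forall>x\<in>configs q N. Hx He G M x \<le> M" using Hx_le[of He, OF assms(1)] by blast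
    show ?thesis unfolding HG_def using configs_fin[of q N] configs_ne[OF assms(2), of N] le
      by (subst Max_eq_iff) (auto simp: image_iff, metis+)
  qed
  also have "\<dots> \<longleftrightarrow> (\<exists>x\<in>configs q N. \<forall>i<M. He (G i) x = 1)"
    unfolding Hx_def using sum_eq_card_iff[of "\<lambda>i. He (G i) _"] assms(1) by simp
  finally show ?thesis .
qed

lemma pM_eq:
  assumes "\<And>e x. He e x \<le> 1" "0 < q" "finite \<Omega>"
  shows "pM \<Omega> He q N M = card (satset \<Omega> He (configs q N) M) / card \<Omega> ^ M"
proof -
  have "{G \<in> {0..<M} \<rightarrow>\<^sub>E \<Omega>. HG He q N G M = M} = satset \<Omega> He (configs q N) M"
    unfolding satset_def using HG_iff[of He, OF assms(1,2)] by auto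
  then show ?thesis unfolding pM_def using assms(3) by (simp add: card_funcsetE)
qed

lemma satset_fin: "finite \<Omega> \<Longrightarrow> finite (satset \<Omega> He X M)"
  unfolding satset_def by (rule finite_subset[of _ "{0..<M} \<rightarrow>\<^sub>E \<Omega>"]) (auto simp: finite_PiE)

lemma satset_mono: "B \<subseteq> X \<Longrightarrow> satset \<Omega> He B M \<subseteq> satset \<Omega> He X M"
  unfolding satset_def by blast

lemma main_count:
  fixes \<delta> :: real and \<Omega> :: "'a set"
  assumes fin: "finite \<Omega>" and BX: "B \<subseteq> X" and d0: "0 \<le> \<delta>"
  and good: "\<forall>x\<in>X - B. real (card {e\<in>\<Omega>. He e x = 1}) \<ge> \<delta> * card \<Omega>"
  shows "real (card (satset \<Omega> He X (M+m))) \<ge>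
     (\<delta> * card \<Omega>)^m * (real (card (satset \<Omega> He X M)) - card (satset \<Omega> He B M))"
proof -
  define A where "A = satset \<Omega> He X M - satset \<Omega> He B M"
  have cA: "real (card A) = real (card (satset \<Omega> He X M)) - card (satset \<Omega> He B M)"
  proof -
    have s: "satset \<Omega> He B M \<subseteq> satset \<Omega> He X M" using satset_mono[OF BX] .
    have f: "finite (satset \<Omega> He B M)" using satset_fin[OF fin] .
    have "card (satset \<Omega> He B M) \<le> card (satset \<Omega> He X M)" using card_mono[OF satset_fin[OF fin] s] .
    then show ?thesis unfolding A_def using card_Diff_subset[OF f s] by (simp add: of_nat_diff)
  qed
  define xG where "xG G = (SOME x. x \<in> X \<and> (\<forall>i<M. He (G i) x = 1))" for G
  have xG: "xG G \<in> X - B \<and> (\<forall>i<M. He (G i) (xG G) = 1)" if "G \<in> A" for G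
  proof -
    from that obtain x where "x \<in> X \<and> (\<forall>i<M. He (G i) x = 1)" unfolding A_def satset_def by auto
    then have h: "xG G \<in> X \<and> (\<forall>i<M. He (G i) (xG G) = 1)" unfolding xG_def by (rule someI[where P="\<lambda>x. x \<in> X \<and> (\<forall>i<M. He (G i) x = 1)"])
    have "xG G \<notin> B" using h that unfolding A_def satset_def by auto
    with h show ?thesis by auto
  qed
  define F where "F G = {M..<M+m} \<rightarrow>\<^sub>E {e\<in>\<Omega>. He e (xG G) = 1}" for G
  define mg where "mg = (\<lambda>(G::nat\<Rightarrow>'a, h::nat\<Rightarrow>'a). (\<lambda>i. if i < M then G i else h i))"
  have finA: "finite A" unfolding A_def using satset_fin[OF fin] by auto
  have finF: "\<forall>G\<in>A. finite (F G)" unfolding F_def using fin by (auto intro!: finite_PiE)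
  have inj: "inj_on mg (Sigma A F)"
  proof (rule inj_onI)
    fix p1 p2 assume p1: "p1 \<in> Sigma A F" and p2: "p2 \<in> Sigma A F" and eq: "mg p1 = mg p2"
    obtain G1 h1 where P1: "p1 = (G1, h1)" "G1 \<in> A" "h1 \<in> F G1" using p1 by auto
    obtain G2 h2 where P2: "p2 = (G2, h2)" "G2 \<in> A" "h2 \<in> F G2" using p2 by auto
    have G1: "G1 \<in> {0..<M} \<rightarrow>\<^sub>E \<Omega>" "G2 \<in> {0..<M} \<rightarrow>\<^sub>E \<Omega>" using P1 P2 unfolding A_def satset_def by auto
    have H1: "h1 \<in> {M..<M+m} \<rightarrow>\<^sub>E UNIV" "h2 \<in> {M..<M+m} \<rightarrow>\<^sub>E UNIV" using P1 P2 unfolding F_def by auto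
    have ee: "(\<lambda>i. if i < M then G1 i else h1 i) = (\<lambda>i. if i < M then G2 i else h2 i)"
      using eq P1 P2 unfolding mg_def by simp
    have e: "(if i < M then G1 i else h1 i) = (if i < M then G2 i else h2 i)" for i
      using fun_cong[OF ee, of i] by simp
    have "G1 = G2"
    proof
      fix i show "G1 i = G2 i" using e[of i] G1 by (cases "i < M") (auto simp: PiE_def extensional_def)
    qed
    moreover have "h1 = h2"
    proof
      fix i show "h1 i = h2 i" using e[of i] H1 by (cases "i < M") (auto simp: PiE_def extensional_def)
    qed
    ultimately show "p1 = p2" using P1 P2 by simp
  qed
  have img: "mg ` Sigma A F \<subseteq> satset \<Omega> He X (M+m)"
  proof
    fix y assume "y \<in> mg ` Sigma A F"
    then obtain G h where Gh: "G \<in> A" "h \<in> F G" "y = mg (G, h)" by auto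
    have G1: "G \<in> {0..<M} \<rightarrow>\<^sub>E \<Omega>" using Gh unfolding A_def satset_def by auto
    have H1: "h \<in> {M..<M+m} \<rightarrow>\<^sub>E {e\<in>\<Omega>. He e (xG G) = 1}" using Gh unfolding F_def by auto
    have y: "y = (\<lambda>i. if i < M then G i else h i)" using Gh unfolding mg_def by simp
    have "y \<in> {0..<M+m} \<rightarrow>\<^sub>E \<Omega>" unfolding y using G1 H1 by (auto simp: PiE_def Pi_def extensional_def)
    moreover have "\<forall>i<M+m. He (y i) (xG G) = 1" unfolding y using xG[OF Gh(1)] H1 by (auto simp: PiE_def Pi_def)
    ultimately show "y \<in> satset \<Omega> He X (M+m)" unfolding satset_def using xG[OF Gh(1)] by blast
  qed
  have "card (Sigma A F) \<le> card (satset \<Omega> He X (M+m))"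
    using card_inj_on_le[OF inj img satset_fin[OF fin]] .
  moreover have "card (Sigma A F) = (\<Sum>G\<in>A. card (F G))" using card_SigmaI[OF finA finF] .
  ultimately have c1: "(\<Sum>G\<in>A. real (card (F G))) \<le> real (card (satset \<Omega> He X (M+m)))"
    by (metis of_nat_le_iff of_nat_sum)
  have c2: "real (card (F G)) \<ge> (\<delta> * card \<Omega>)^m" if "G \<in> A" for G
  proof -
    have "card (F G) = card {e\<in>\<Omega>. He e (xG G) = 1} ^ m" unfolding F_def by (simp add: card_funcsetE)
    then have "real (card (F G)) = real (card {e\<in>\<Omega>. He e (xG G) = 1}) ^ m" by simp
    moreover have "real (card {e\<in>\<Omega>. He e (xG G) = 1}) \<ge> \<delta> * card \<Omega>" using good xG[OF that] by blast
    ultimately show ?thesis using d0 by (simp add: power_mono)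
  qed
  have "(\<delta> * card \<Omega>)^m * real (card A) = (\<Sum>G\<in>A. (\<delta> * card \<Omega>)^m)" by simp
  also have "\<dots> \<le> (\<Sum>G\<in>A. real (card (F G)))" by (rule sum_mono) (use c2 in auto)
  finally show ?thesis using c1 cA by simp
qed

lemma pM_step:
  fixes \<delta> :: real and \<Omega> :: "'a set"
  assumes fin: "finite \<Omega>" and ne: "\<Omega> \<noteq> {}" and le1: "\<And>e x. He e x \<le> 1" and q: "0 < q"
  and BX: "B \<subseteq> configs q N" and d0: "0 \<le> \<delta>" and d1: "\<delta> \<le> 1"
  and good: "\<forall>x\<in>configs q N - B. real (card {e\<in>\<Omega>. He e x = 1}) \<ge> \<delta> * card \<Omega>"
  shows "pM \<Omega> He q N (M+m) \<ge> \<delta>^m * pM \<Omega> He q N M - real (card (satset \<Omega> He B M)) / real (card \<Omega>) ^ M"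
proof -
  define w where "w = real (card \<Omega>)"
  have w0: "w > 0" unfolding w_def using fin ne by (simp add: card_gt_0_iff)
  define S where "S = real (card (satset \<Omega> He (configs q N) M))"
  define S' where "S' = real (card (satset \<Omega> He (configs q N) (M+m)))"
  define T where "T = real (card (satset \<Omega> He B M))"
  have mc: "S' \<ge> (\<delta> * w)^m * (S - T)" unfolding S'_def S_def T_def w_def
    by (rule main_count[OF fin BX d0 good])
  have p1: "pM \<Omega> He q N (M+m) = S' / w^(M+m)" unfolding S'_def w_def using pM_eq[of He, OF le1 q fin] by simp
  have p2: "pM \<Omega> He q N M = S / w^M" unfolding S_def w_def using pM_eq[of He, OF le1 q fin] by simp
  have T0: "T \<ge> 0" unfolding T_def by simp
  have "\<delta>^m * pM \<Omega> He q N M - T / w ^ M \<le> \<delta>^m * (S / w^M) - \<delta>^m * (T / w^M)"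
  proof -
    have "\<delta>^m \<le> 1" using d0 d1 by (simp add: power_le_one)
    moreover have "T / w^M \<ge> 0" using T0 w0 by simp
    ultimately have "\<delta>^m * (T / w^M) \<le> T / w^M" using mult_left_le_one_le[of "T / w^M" "\<delta>^m"] d0 by simp
    then show ?thesis using p2 by simp
  qed
  also have "\<dots> = (\<delta> * w)^m * (S - T) / w^(M+m)" using w0 by (simp add: field_simps power_add power_mult_distrib)
  also have "\<dots> \<le> S' / w^(M+m)" using mc w0 by (simp add: divide_right_mono)
  finally show ?thesis using p1 unfolding T_def w_def by simp
qed

lemma half_good:
  fixes \<delta> :: real
  assumes fin: "finite \<Omega>" and d: "\<delta> < 1/2" and U: "2 * card {e\<in>\<Omega>. He e x \<noteq> 1} \<le> card \<Omega>"
  shows "real (card {e\<in>\<Omega>. He e x = 1}) \<ge> \<delta> * card \<Omega>"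
proof -
  have "{e\<in>\<Omega>. He e x = 1} = \<Omega> - {e\<in>\<Omega>. He e x \<noteq> 1}" by auto
  then have "card {e\<in>\<Omega>. He e x = 1} = card \<Omega> - card {e\<in>\<Omega>. He e x \<noteq> 1}"
    using fin by (simp add: card_Diff_subset)
  moreover have "card {e\<in>\<Omega>. He e x \<noteq> 1} \<le> card \<Omega>" using fin by (intro card_mono) auto
  ultimately have "real (card {e\<in>\<Omega>. He e x = 1}) = real (card \<Omega>) - card {e\<in>\<Omega>. He e x \<noteq> 1}"
    by (simp add: of_nat_diff)
  moreover have "2 * real (card {e\<in>\<Omega>. He e x \<noteq> 1}) \<le> real (card \<Omega>)" using U
    by (metis of_nat_le_iff of_nat_mult of_nat_numeral)
  moreover have "\<delta> * card \<Omega> \<le> card \<Omega> / 2" using mult_right_mono[of \<delta> "1/2" "real (card \<Omega>)"] d by simp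
  ultimately show ?thesis by linarith
qed

lemma hyp_fin: "finite (hyperedges N K)" unfolding hyperedges_def by (simp add: finite_PiE)

lemma card_Om: "card (hyperedges N K \<times> ({0..<K} \<rightarrow>\<^sub>E {0..<2::nat})) = card (hyperedges N K) * 2^K"
  by (simp add: card_cartesian_product card_funcsetE)

lemma sat_good:
  fixes \<delta> :: real
  assumes "K \<ge> 2" "\<delta> < 1/2"
  shows "real (card {e\<in>hyperedges N K \<times> ({0..<K} \<rightarrow>\<^sub>E {0..<2}). sat_He K e x = 1})
     \<ge> \<delta> * card (hyperedges N K \<times> ({0..<K} \<rightarrow>\<^sub>E {0..<2::nat}))"
proof (rule half_good)
  let ?\<Omega> = "hyperedges N K \<times> ({0..<K} \<rightarrow>\<^sub>E {0..<2::nat})"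
  show "finite ?\<Omega>" using hyp_fin by (simp add: finite_PiE)
  show "\<delta> < 1/2" by fact
  have sub: "{e\<in>?\<Omega>. sat_He K e x \<noteq> 1} \<subseteq> (\<lambda>f. (f, restrict (\<lambda>j. x (f j)) {0..<K})) ` hyperedges N K"
  proof
    fix e assume e: "e \<in> {e\<in>?\<Omega>. sat_He K e x \<noteq> 1}"
    obtain f a where fa: "e = (f, a)" by (cases e)
    have f: "f \<in> hyperedges N K" and a: "a \<in> {0..<K} \<rightarrow>\<^sub>E {0..<2}" and eq: "\<forall>j<K. x (f j) = a j"
      using e fa by (auto simp: sat_He_def split: if_splits)
    have "a = restrict (\<lambda>j. x (f j)) {0..<K}"
    proof
      fix j show "a j = restrict (\<lambda>j. x (f j)) {0..<K} j" using a eq by (cases "j < K") (auto simp: PiE_def extensional_def)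
    qed
    then show "e \<in> (\<lambda>f. (f, restrict (\<lambda>j. x (f j)) {0..<K})) ` hyperedges N K" using fa f by auto
  qed
  have "card {e\<in>?\<Omega>. sat_He K e x \<noteq> 1} \<le> card (hyperedges N K)"
    using card_mono[OF finite_imageI[OF hyp_fin] sub] card_image_le[OF hyp_fin[of N K], of "\<lambda>f. (f, restrict (\<lambda>j. x (f j)) {0..<K})"] by linarith
  moreover have "(4::nat) \<le> 2^K" using assms(1) power_increasing[of 2 K "2::nat"] by simp
  then have "4 * card (hyperedges N K) \<le> card (hyperedges N K) * 2^K" by simp
  ultimately show "2 * card {e\<in>?\<Omega>. sat_He K e x \<noteq> 1} \<le> card ?\<Omega>" unfolding card_Om by linarith
qed




lemma restr1:
  fixes K :: nat
  assumes a: "a \<in> {0..<K} \<rightarrow>\<^sub>E ({0..<2}::nat set)" and eq: "\<forall>j<K. x (f j) = a j"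
  shows "a = restrict (\<lambda>j. x (f j)) {0..<K}"
proof
  fix j show "a j = restrict (\<lambda>j. x (f j)) {0..<K} j"
  proof (cases "j < K")
    case True
    then have "x (f j) = a j" using eq by blast
    moreover have "j \<in> {0..<K}" using True by simp
    ultimately show ?thesis by (simp only: restrict_apply')
  next
    case False
    then have nj: "j \<notin> {0..<K}" by simp
    have r: "restrict (\<lambda>j. x (f j)) {0..<K} j = undefined" using nj by (simp add: restrict_def)
    have aj: "a j = undefined" by (rule PiE_arb[OF a nj])
    show ?thesis using r aj by simp
  qed
qed


lemma restr2:
  fixes K :: nat
  assumes a: "a \<in> {0..<K} \<rightarrow>\<^sub>E ({0..<2}::nat set)" and eq: "\<forall>j<K. x (f j) = 1 - a j"
  shows "a = restrict (\<lambda>j. 1 - x (f j)) {0..<K}"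
proof
  fix j show "a j = restrict (\<lambda>j. 1 - x (f j)) {0..<K} j"
  proof (cases "j < K")
    case True
    have "a j \<in> {0..<2}" using PiE_mem[OF a, of j] True by simp
    then have a2: "a j < 2" by simp
    have xe: "x (f j) = 1 - a j" using eq True by blast
    have jK: "j \<in> {0..<K}" using True by simp
    have "restrict (\<lambda>j. 1 - x (f j)) {0..<K} j = 1 - x (f j)" using jK by (rule restrict_apply')
    also have "\<dots> = a j" using xe a2 by simp
    finally show ?thesis by simp
  next
    case False
    then have nj: "j \<notin> {0..<K}" by simp
    have r: "restrict (\<lambda>j. 1 - x (f j)) {0..<K} j = undefined" using nj by (simp add: restrict_def)
    have aj: "a j = undefined" by (rule PiE_arb[OF a nj])
    show ?thesis using r aj by simp
  qed
qed

lemma nae_good: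
  fixes \<delta> :: real
  assumes "K \<ge> 2" "\<delta> < 1/2"
  shows "real (card {e\<in>hyperedges N K \<times> ({0..<K} \<rightarrow>\<^sub>E {0..<2}). nae_He K e x = 1})
     \<ge> \<delta> * card (hyperedges N K \<times> ({0..<K} \<rightarrow>\<^sub>E {0..<2::nat}))"
proof (rule half_good)
  let ?\<Omega> = "hyperedges N K \<times> ({0..<K} \<rightarrow>\<^sub>E {0..<2::nat})"
  show "finite ?\<Omega>" using hyp_fin[of N K] by (simp add: finite_PiE)
  show "\<delta> < 1/2" by fact
  let ?g1 = "\<lambda>f. (f, restrict (\<lambda>j. x (f j)) {0..<K})"
  let ?g2 = "\<lambda>f. (f, restrict (\<lambda>j. 1 - x (f j)) {0..<K})"
  have sub: "{e\<in>?\<Omega>. nae_He K e x \<noteq> 1} \<subseteq> ?g1 ` hyperedges N K \<union> ?g2 ` hyperedges N K"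
  proof
    fix e assume e: "e \<in> {e\<in>?\<Omega>. nae_He K e x \<noteq> 1}"
    obtain f a where fa: "e = (f, a)" by (cases e)
    have f: "f \<in> hyperedges N K" and a: "a \<in> {0..<K} \<rightarrow>\<^sub>E {0..<2}" using e fa by auto
    have eq: "(\<forall>j<K. x (f j) = a j) \<or> (\<forall>j<K. x (f j) = 1 - a j)"
      using e fa unfolding nae_He_def by (simp split: if_splits)
    show "e \<in> ?g1 ` hyperedges N K \<union> ?g2 ` hyperedges N K"
    proof (cases "\<forall>j<K. x (f j) = a j")
      case True
      then have "a = restrict (\<lambda>j. x (f j)) {0..<K}" by (rule restr1[OF a])
      then have "e = ?g1 f" using fa by simp
      then show ?thesis using f by blast
    next
      case False
      then have "\<forall>j<K. x (f j) = 1 - a j" using eq by blast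
      then have "a = restrict (\<lambda>j. 1 - x (f j)) {0..<K}" by (rule restr2[OF a])
      then have "e = ?g2 f" using fa by simp
      then show ?thesis using f by blast
    qed
  qed
  have "card {e\<in>?\<Omega>. nae_He K e x \<noteq> 1} \<le> card (?g1 ` hyperedges N K \<union> ?g2 ` hyperedges N K)"
    by (rule card_mono[OF _ sub]) (use hyp_fin[of N K] in simp)
  also have "\<dots> \<le> card (?g1 ` hyperedges N K) + card (?g2 ` hyperedges N K)" by (rule card_Un_le)
  also have "\<dots> \<le> 2 * card (hyperedges N K)"
    using card_image_le[OF hyp_fin[of N K], of ?g1] card_image_le[OF hyp_fin[of N K], of ?g2] by linarith
  finally have c: "card {e\<in>?\<Omega>. nae_He K e x \<noteq> 1} \<le> 2 * card (hyperedges N K)" .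
  have "(4::nat) \<le> 2^K" using assms(1) power_increasing[of 2 K "2::nat"] by simp
  then have "4 * card (hyperedges N K) \<le> card (hyperedges N K) * 2^K" by simp
  then show "2 * card {e\<in>?\<Omega>. nae_He K e x \<noteq> 1} \<le> card ?\<Omega>" unfolding card_Om using c by linarith
qed

lemma entropy_term:
  fixes \<delta> :: real and k N :: nat
  assumes d0: "0 < \<delta>" and d1: "\<delta> < 1/2" and k: "k \<le> N" "real k < \<delta> * N"
  shows "exp (- entropy \<delta> * N) \<le> \<delta>^k * (1-\<delta>)^(N-k)"
proof -
  have l: "ln \<delta> \<le> ln (1-\<delta>)" using d0 d1 by simp
  have "(\<delta> * N - k) * ln \<delta> \<le> (\<delta> * N - k) * ln (1-\<delta>)"
    using k(2) l by (intro mult_left_mono) auto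
  then have "- entropy \<delta> * N \<le> real k * ln \<delta> + real (N-k) * ln (1-\<delta>)"
    unfolding entropy_def using k(1) by (simp add: of_nat_diff algebra_simps)
  then have "exp (- entropy \<delta> * N) \<le> exp (real k * ln \<delta> + real (N-k) * ln (1-\<delta>))" by simp
  also have "\<dots> = exp (ln \<delta>)^k * exp (ln (1-\<delta>))^(N-k)" by (simp add: exp_add exp_of_nat_mult)
  also have "\<dots> = \<delta>^k * (1-\<delta>)^(N-k)" using d0 d1 by simp
  finally show ?thesis .
qed

lemma small_sets_card:
  fixes \<delta> :: real and N :: nat
  assumes d0: "0 < \<delta>" and d1: "\<delta> < 1/2"
  shows "real (card {T. T \<subseteq> {0..<N} \<and> real (card T) < \<delta> * N}) \<le> exp (entropy \<delta> * N)"
proof -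
  define Ks where "Ks = {k. k \<le> N \<and> real k < \<delta> * N}"
  have finKs: "finite Ks" unfolding Ks_def by simp
  have eqU: "{T. T \<subseteq> {0..<N} \<and> real (card T) < \<delta> * N} = (\<Union>k\<in>Ks. {T. T \<subseteq> {0..<N} \<and> card T = k})"
  proof -
    have "T \<subseteq> {0..<N} \<Longrightarrow> card T \<le> N" for T using card_mono[of "{0..<N}" T] by simp
    then show ?thesis unfolding Ks_def by auto
  qed
  have "card {T. T \<subseteq> {0..<N} \<and> real (card T) < \<delta> * N} \<le> (\<Sum>k\<in>Ks. card {T. T \<subseteq> {0..<N} \<and> card T = k})"
    unfolding eqU by (rule card_UN_le[OF finKs])
  also have "\<dots> = (\<Sum>k\<in>Ks. N choose k)" by (simp add: n_subsets)
  finally have c1: "real (card {T. T \<subseteq> {0..<N} \<and> real (card T) < \<delta> * N}) \<le> (\<Sum>k\<in>Ks. real (N choose k))"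
    by (metis of_nat_le_iff of_nat_sum)
  have "(\<Sum>k\<in>Ks. real (N choose k)) * exp (- entropy \<delta> * N) = (\<Sum>k\<in>Ks. real (N choose k) * exp (- entropy \<delta> * N))"
    by (simp add: sum_distrib_right)
  also have "\<dots> \<le> (\<Sum>k\<in>Ks. real (N choose k) * (\<delta>^k * (1-\<delta>)^(N-k)))"
    by (rule sum_mono) (use entropy_term[OF d0 d1] in \<open>auto simp: Ks_def intro!: mult_left_mono\<close>)
  also have "\<dots> \<le> (\<Sum>k\<le>N. real (N choose k) * (\<delta>^k * (1-\<delta>)^(N-k)))"
    by (rule sum_mono2) (use d0 d1 in \<open>auto simp: Ks_def\<close>)
  also have "\<dots> = (\<delta> + (1-\<delta>))^N" unfolding binomial_ring by (simp add: mult.assoc)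
  also have "\<dots> = 1" by simp
  finally have "(\<Sum>k\<in>Ks. real (N choose k)) \<le> 1 / exp (- entropy \<delta> * N)"
    by (simp add: field_simps)
  also have "\<dots> = exp (entropy \<delta> * N)" by (simp add: exp_minus field_simps)
  finally show ?thesis using c1 by linarith
qed

lemma two_ext:
  assumes e: "e \<in> {0..<2::nat} \<rightarrow>\<^sub>E A"
  shows "e = (\<lambda>i\<in>{0..<2::nat}. if i = 0 then e 0 else e 1)"
proof
  fix i :: nat
  show "e i = (\<lambda>i\<in>{0..<2::nat}. if i = 0 then e 0 else e 1) i"
  proof (cases "i < 2")
    case True
    then have "i = 0 \<or> i = 1" by auto
    moreover have "i \<in> {0..<2}" using True by simp
    ultimately show ?thesis by (auto simp only: restrict_apply') simp_all
  next
    case False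
    then have ni: "i \<notin> {0..<2}" by simp
    have r: "(\<lambda>i\<in>{0..<2::nat}. if i = 0 then e 0 else e 1) i = undefined" using ni by (simp add: restrict_def)
    have ei: "e i = undefined" by (rule PiE_arb[OF e ni])
    show ?thesis using r ei by simp
  qed
qed

lemma card_hyp2: "card (hyperedges N 2) = N^2"
  unfolding hyperedges_def by (simp add: card_funcsetE)

lemma col_good:
  fixes \<delta> :: real
  assumes hx: "\<forall>c. real (card {v\<in>{0..<N}. x v \<noteq> c}) \<ge> \<delta> * N"
  shows "real (card {e\<in>hyperedges N 2. col_He e x = 1}) \<ge> \<delta> * card (hyperedges N 2)"
proof -
  let ?\<Omega> = "hyperedges N 2"
  have finO: "finite ?\<Omega>" by (rule hyp_fin)
  define Uv where "Uv v = {e\<in>?\<Omega>. e 0 = v \<and> x (e 1) = x v}" for v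
  define C where "C v = {w\<in>{0..<N}. x w = x v}" for v
  let ?U = "{e\<in>?\<Omega>. col_He e x \<noteq> 1}"
  have sub: "?U \<subseteq> (\<Union>v\<in>{0..<N}. Uv v)"
  proof
    fix e assume e: "e \<in> ?U"
    then have eO: "e \<in> {0..<2::nat} \<rightarrow>\<^sub>E {0..<N}" unfolding hyperedges_def by simp
    have "e 0 \<in> {0..<N}" using PiE_mem[OF eO, of 0] by simp
    moreover have "x (e 0) = x (e 1)" using e unfolding col_He_def by (simp split: if_splits)
    ultimately show "e \<in> (\<Union>v\<in>{0..<N}. Uv v)" unfolding Uv_def using e by auto
  qed
  have cUv: "card (Uv v) \<le> card (C v)" for v
  proof (rule card_inj_on_le[where f="\<lambda>e. e 1"])
    show "inj_on (\<lambda>e. e 1) (Uv v)"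
    proof (rule inj_onI)
      fix e e' assume e: "e \<in> Uv v" and e': "e' \<in> Uv v" and eq: "e 1 = e' 1"
      have eO: "e \<in> {0..<2::nat} \<rightarrow>\<^sub>E {0..<N}" "e' \<in> {0..<2::nat} \<rightarrow>\<^sub>E {0..<N}"
        using e e' unfolding Uv_def hyperedges_def by auto
      have "e 0 = e' 0" using e e' unfolding Uv_def by simp
      have "e = (\<lambda>i\<in>{0..<2::nat}. if i = 0 then e 0 else e 1)" by (rule two_ext[OF eO(1)])
      also have "\<dots> = (\<lambda>i\<in>{0..<2::nat}. if i = 0 then e' 0 else e' 1)" by (simp only: \<open>e 0 = e' 0\<close> eq)
      also have "\<dots> = e'" by (rule two_ext[OF eO(2), symmetric])
      finally show "e = e'" .
    qed
    show "(\<lambda>e. e 1) ` Uv v \<subseteq> C v"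
    proof
      fix w assume "w \<in> (\<lambda>e. e 1) ` Uv v"
      then obtain e where e: "e \<in> Uv v" "w = e 1" by auto
      have eO: "e \<in> {0..<2::nat} \<rightarrow>\<^sub>E {0..<N}" using e unfolding Uv_def hyperedges_def by auto
      have "e 1 \<in> {0..<N}" using PiE_mem[OF eO, of 1] by simp
      then show "w \<in> C v" using e unfolding C_def Uv_def by auto
    qed
    show "finite (C v)" unfolding C_def by simp
  qed
  have cC: "real (card (C v)) \<le> real N - \<delta> * N" for v
  proof -
    let ?D = "{w\<in>{0..<N}. x w \<noteq> x v}"
    have "C v = {0..<N} - ?D" unfolding C_def by auto
    moreover have "card ({0..<N} - ?D) = card {0..<N} - card ?D" by (rule card_Diff_subset) auto
    ultimately have "card (C v) = N - card ?D" by simp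
    moreover have "card ?D \<le> N" using card_mono[of "{0..<N}" ?D] by fastforce
    ultimately have "real (card (C v)) = real N - card ?D" by (simp add: of_nat_diff)
    then show ?thesis using hx[rule_format, of "x v"] by linarith
  qed
  have "card ?U \<le> card (\<Union>v\<in>{0..<N}. Uv v)"
  proof (rule card_mono[OF _ sub])
    have "(\<Union>v\<in>{0..<N}. Uv v) \<subseteq> ?\<Omega>" unfolding Uv_def by blast
    then show "finite (\<Union>v\<in>{0..<N}. Uv v)" using finite_subset finO by blast
  qed
  also have "\<dots> \<le> (\<Sum>v\<in>{0..<N}. card (Uv v))" by (rule card_UN_le) simp
  also have "\<dots> \<le> (\<Sum>v\<in>{0..<N}. card (C v))" by (rule sum_mono) (rule cUv)
  finally have u1: "card ?U \<le> (\<Sum>v\<in>{0..<N}. card (C v))" .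
  have u2: "real (card ?U) \<le> (\<Sum>v\<in>{0..<N}. real (card (C v)))"
    using u1 by (simp only: of_nat_sum[symmetric] of_nat_le_iff)
  have u3: "(\<Sum>v\<in>{0..<N}. real (card (C v))) \<le> (\<Sum>v\<in>{0..<N}. (real N - \<delta> * N))"
    by (rule sum_mono) (rule cC)
  have u4: "(\<Sum>v\<in>{0..<N}. (real N - \<delta> * N)) = real N * (real N - \<delta> * N)" by simp
  have cU: "real (card ?U) \<le> real N * (real N - \<delta> * N)" using u2 u3 u4 by linarith
  have "{e\<in>?\<Omega>. col_He e x = 1} = ?\<Omega> - ?U" by blast
  moreover have "card (?\<Omega> - ?U) = card ?\<Omega> - card ?U" using finO by (intro card_Diff_subset) auto
  ultimately have c1: "card {e\<in>?\<Omega>. col_He e x = 1} = card ?\<Omega> - card ?U" by simp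
  have "card ?U \<le> card ?\<Omega>" using finO by (intro card_mono) auto
  then have c2: "real (card {e\<in>?\<Omega>. col_He e x = 1}) = real (card ?\<Omega>) - real (card ?U)"
    using c1 by (simp add: of_nat_diff)
  have c3: "real (card ?\<Omega>) = real N ^ 2" unfolding card_hyp2 by simp
  have c4: "real N * (real N - \<delta> * N) = real N ^ 2 - \<delta> * real N ^ 2" by (simp add: power2_eq_square algebra_simps)
  have c5: "\<delta> * real (card ?\<Omega>) = \<delta> * real N ^ 2" using c3 by simp
  show ?thesis using c2 c3 c4 c5 cU by linarith
qed

lemma col_bad:
  fixes \<delta> :: real and N M :: nat
  assumes d0: "0 < \<delta>" and d1: "\<delta> < 1/2"
  shows "real (card (satset (hyperedges N 2) col_He
            {x\<in>configs q N. \<exists>c. real (card {v\<in>{0..<N}. x v \<noteq> c}) < \<delta> * N} M))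
         \<le> exp (entropy \<delta> * N) * ((2*\<delta>)^M * real (N^2)^M)"
proof -
  let ?\<Omega> = "hyperedges N 2"
  let ?B = "{x\<in>configs q N. \<exists>c. real (card {v\<in>{0..<N}. x v \<noteq> c}) < \<delta> * N}"
  define TT where "TT = {T. T \<subseteq> {0..<N} \<and> real (card T) < \<delta> * N}"
  define OmT where "OmT T = {e\<in>?\<Omega>. e 0 \<in> T \<or> e 1 \<in> T}" for T
  have finTT: "finite TT" unfolding TT_def
    by (rule finite_subset[of _ "Pow {0..<N}"]) auto
  have sub: "satset ?\<Omega> col_He ?B M \<subseteq> (\<Union>T\<in>TT. {0..<M} \<rightarrow>\<^sub>E OmT T)"
  proof
    fix G assume G: "G \<in> satset ?\<Omega> col_He ?B M"
    then obtain x where x: "x \<in> ?B" and sat: "\<forall>i<M. col_He (G i) x = 1" and GP: "G \<in> {0..<M} \<rightarrow>\<^sub>E ?\<Omega>"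
      unfolding satset_def by blast
    obtain c where c: "real (card {v\<in>{0..<N}. x v \<noteq> c}) < \<delta> * N" using x by blast
    let ?T = "{v\<in>{0..<N}. x v \<noteq> c}"
    have T: "?T \<in> TT" unfolding TT_def using c by auto
    have "G \<in> {0..<M} \<rightarrow>\<^sub>E OmT ?T"
    proof -
      have "G i \<in> OmT ?T" if i: "i \<in> {0..<M}" for i
      proof -
        have Gi: "G i \<in> ?\<Omega>" using PiE_mem[OF GP i] .
        then have GiP: "G i \<in> {0..<2::nat} \<rightarrow>\<^sub>E {0..<N}" unfolding hyperedges_def .
        have "G i 0 \<in> {0..<N}" using PiE_mem[OF GiP, of 0] by simp
        moreover have "G i 1 \<in> {0..<N}" using PiE_mem[OF GiP, of 1] by simp
        moreover have "x (G i 0) \<noteq> x (G i 1)" using sat i unfolding col_He_def by (auto split: if_splits)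
        ultimately show ?thesis unfolding OmT_def using Gi by auto
      qed
      then show ?thesis using GP by (auto simp: PiE_def)
    qed
    then show "G \<in> (\<Union>T\<in>TT. {0..<M} \<rightarrow>\<^sub>E OmT T)" using T by blast
  qed
  have cOm: "real (card (OmT T)) \<le> 2 * \<delta> * real (N^2)" if T: "T \<in> TT" for T
  proof -
    have TN: "T \<subseteq> {0..<N}" and tT: "real (card T) < \<delta> * N" using T unfolding TT_def by auto
    define g where "g = (\<lambda>(a::nat, b::nat). (\<lambda>i\<in>{0..<2::nat}. if i = 0 then a else b))"
    have s: "OmT T \<subseteq> g ` (T \<times> {0..<N} \<union> {0..<N} \<times> T)"
    proof
      fix e assume e: "e \<in> OmT T"
      then have eP: "e \<in> {0..<2::nat} \<rightarrow>\<^sub>E {0..<N}" unfolding OmT_def hyperedges_def by simp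
      have "e 0 \<in> {0..<N}" using PiE_mem[OF eP, of 0] by simp
      moreover have "e 1 \<in> {0..<N}" using PiE_mem[OF eP, of 1] by simp
      moreover have "e 0 \<in> T \<or> e 1 \<in> T" using e unfolding OmT_def by simp
      ultimately have "(e 0, e 1) \<in> T \<times> {0..<N} \<union> {0..<N} \<times> T" by auto
      moreover have "e = g (e 0, e 1)" unfolding g_def by (simp only: prod.case) (rule two_ext[OF eP])
      ultimately show "e \<in> g ` (T \<times> {0..<N} \<union> {0..<N} \<times> T)" by blast
    qed
    have finT: "finite T" using TN finite_subset by blast
    have "card (OmT T) \<le> card (g ` (T \<times> {0..<N} \<union> {0..<N} \<times> T))"
      by (rule card_mono[OF _ s]) (use finT in simp)
    also have "\<dots> \<le> card (T \<times> {0..<N} \<union> {0..<N} \<times> T)" by (rule card_image_le) (use finT in simp)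
    also have "\<dots> \<le> card (T \<times> {0..<N}) + card ({0..<N} \<times> T)" by (rule card_Un_le)
    also have "\<dots> = 2 * (card T * N)" by (simp add: card_cartesian_product)
    finally have "real (card (OmT T)) \<le> 2 * (real (card T) * real N)"
      by (metis of_nat_le_iff of_nat_mult of_nat_numeral)
    also have "\<dots> \<le> 2 * (\<delta> * N * real N)" using tT by (intro mult_left_mono mult_right_mono) auto
    finally show ?thesis by (simp add: power2_eq_square mult.assoc)
  qed
  have finOm: "finite (OmT T)" for T unfolding OmT_def using hyp_fin[of N 2] by simp
  have "card (satset ?\<Omega> col_He ?B M) \<le> card (\<Union>T\<in>TT. {0..<M} \<rightarrow>\<^sub>E OmT T)"
    by (rule card_mono[OF _ sub]) (use finTT finOm in \<open>auto intro!: finite_PiE\<close>)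
  also have "\<dots> \<le> (\<Sum>T\<in>TT. card ({0..<M} \<rightarrow>\<^sub>E OmT T))" by (rule card_UN_le[OF finTT])
  also have "\<dots> = (\<Sum>T\<in>TT. card (OmT T) ^ M)" by (simp add: card_funcsetE)
  finally have b1: "real (card (satset ?\<Omega> col_He ?B M)) \<le> (\<Sum>T\<in>TT. real (card (OmT T)) ^ M)"
    by (simp only: of_nat_sum[symmetric] of_nat_power[symmetric] of_nat_le_iff)
  have b2: "(\<Sum>T\<in>TT. real (card (OmT T)) ^ M) \<le> (\<Sum>T\<in>TT. (2 * \<delta> * real (N^2)) ^ M)"
    by (rule sum_mono) (use cOm in \<open>auto intro!: power_mono\<close>)
  have b3: "(\<Sum>T\<in>TT. (2 * \<delta> * real (N^2)) ^ M) = real (card TT) * (2 * \<delta> * real (N^2)) ^ M" by simp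
  have b4: "real (card TT) \<le> exp (entropy \<delta> * N)" unfolding TT_def by (rule small_sets_card[OF d0 d1])
  have b5: "real (card TT) * (2 * \<delta> * real (N^2)) ^ M \<le> exp (entropy \<delta> * N) * (2 * \<delta> * real (N^2)) ^ M"
    using b4 d0 by (intro mult_right_mono) auto
  have b6: "(2 * \<delta> * real (N^2)) ^ M = (2*\<delta>)^M * real (N^2)^M" by (simp add: power_mult_distrib)
  have b7: "exp (entropy \<delta> * N) * (2 * \<delta> * real (N^2)) ^ M = exp (entropy \<delta> * N) * ((2*\<delta>)^M * real (N^2)^M)"
    using b6 by simp
  show ?thesis using b1 b2 b3 b5 b7 by linarith
qed

lemma const_smallo: "(\<lambda>N::nat. (c::real)) \<in> o(\<lambda>N. real N)"
proof (rule smalloI_tendsto)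
  show "(\<lambda>N::nat. c / real N) \<longlonglongrightarrow> 0" by (rule lim_const_over_n)
  show "\<forall>\<^sub>F x in at_top. real x \<noteq> 0" by (rule eventually_at_top_linorderI[of 1]) auto
qed

lemma hyp_ne: "0 < N \<Longrightarrow> hyperedges N K \<noteq> {}"
  unfolding hyperedges_def by (auto simp: PiE_eq_empty_iff)

lemma satset_empty: "satset \<Omega> He {} M = {}" unfolding satset_def by auto

lemma col_part:
  fixes \<delta> :: real
  assumes q: "q \<ge> 2" and d0: "0 < \<delta>" and d1: "\<delta> < 1/2" and N: "0 < N"
  shows "p_col q N (M + m) \<ge> \<delta> ^ m * p_col q N M
                 - (2 * \<delta>) ^ (M + 1) * exp (entropy \<delta> * real N + (- ln (2*\<delta>)))"
proof -
  let ?B = "{x\<in>configs q N. \<exists>c. real (card {v\<in>{0..<N}. x v \<noteq> c}) < \<delta> * N}"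
  have le1: "\<And>e x. col_He e x \<le> 1" unfolding col_He_def by simp
  have good: "\<forall>x\<in>configs q N - ?B. real (card {e\<in>hyperedges N 2. col_He e x = 1}) \<ge> \<delta> * card (hyperedges N 2)"
  proof
    fix x assume "x \<in> configs q N - ?B"
    then have "\<forall>c. real (card {v\<in>{0..<N}. x v \<noteq> c}) \<ge> \<delta> * N" by (auto simp: not_less)
    then show "real (card {e\<in>hyperedges N 2. col_He e x = 1}) \<ge> \<delta> * card (hyperedges N 2)" by (rule col_good)
  qed
  have st: "pM (hyperedges N 2) col_He q N (M+m) \<ge> \<delta>^m * pM (hyperedges N 2) col_He q N M
      - real (card (satset (hyperedges N 2) col_He ?B M)) / real (card (hyperedges N 2)) ^ M"
    by (rule pM_step[OF hyp_fin hyp_ne[OF N] le1]) (use q d0 d1 good in auto)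
  have pos: "real (N^2)^M > 0" using N by simp
  have ch: "real (card (hyperedges N 2)) = real (N^2)" by (simp only: card_hyp2)
  have cb: "real (card (satset (hyperedges N 2) col_He ?B M)) \<le> exp (entropy \<delta> * N) * ((2*\<delta>)^M * real (N^2)^M)"
    by (rule col_bad[OF d0 d1])
  have "real (card (satset (hyperedges N 2) col_He ?B M)) / real (card (hyperedges N 2)) ^ M
     \<le> exp (entropy \<delta> * N) * (2*\<delta>)^M"
    unfolding ch using cb pos by (simp add: pos_divide_le_eq mult.assoc)
  also have "\<dots> = (2 * \<delta>) ^ (M + 1) * exp (entropy \<delta> * real N + (- ln (2*\<delta>)))"
  proof -
    have "exp (entropy \<delta> * real N + (- ln (2*\<delta>))) = exp (entropy \<delta> * real N) / (2*\<delta>)"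
      using d0 by (simp add: exp_diff)
    then show ?thesis using d0 by (simp add: field_simps)
  qed
  finally show ?thesis using st unfolding p_col_def by linarith
qed

lemma sat_part:
  fixes \<delta> :: real
  assumes K: "K \<ge> 2" and d0: "0 < \<delta>" and d1: "\<delta> < 1/2" and N: "0 < N"
  shows "p_sat K N (M + m) \<ge> \<delta> ^ m * p_sat K N M
                 - (2 * \<delta>) ^ (M + 1) * exp (entropy \<delta> * real N + 0)"
proof -
  have le1: "\<And>e x. sat_He K e x \<le> 1" unfolding sat_He_def by simp
  have ne: "hyperedges N K \<times> ({0..<K} \<rightarrow>\<^sub>E {0..<2::nat}) \<noteq> {}"
    using hyp_ne[OF N] by (auto simp: PiE_eq_empty_iff)
  have fin: "finite (hyperedges N K \<times> ({0..<K} \<rightarrow>\<^sub>E {0..<2::nat}))" using hyp_fin[of N K] by (simp add: finite_PiE)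
  have st: "p_sat K N (M+m) \<ge> \<delta>^m * p_sat K N M
      - real (card (satset (hyperedges N K \<times> ({0..<K} \<rightarrow>\<^sub>E {0..<2::nat})) (sat_He K) {} M)) / real (card (hyperedges N K \<times> ({0..<K} \<rightarrow>\<^sub>E {0..<2::nat}))) ^ M"
    unfolding p_sat_def
    by (rule pM_step[OF fin ne le1]) (use K d0 d1 sat_good[OF K d1] in auto)
  have t0: "(2 * \<delta>) ^ (M + 1) * exp (entropy \<delta> * real N + 0) \<ge> 0" using d0 by simp
  have z: "real (card (satset (hyperedges N K \<times> ({0..<K} \<rightarrow>\<^sub>E {0..<2::nat})) (sat_He K) {} M)) = 0"
    by (simp add: satset_empty)
  then have z': "real (card (satset (hyperedges N K \<times> ({0..<K} \<rightarrow>\<^sub>E {0..<2::nat})) (sat_He K) {} M)) / real (card (hyperedges N K \<times> ({0..<K} \<rightarrow>\<^sub>E {0..<2::nat}))) ^ M = 0"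
    by simp
  show ?thesis using st t0 z' by linarith
qed

lemma nae_part:
  fixes \<delta> :: real
  assumes K: "K \<ge> 2" and d0: "0 < \<delta>" and d1: "\<delta> < 1/2" and N: "0 < N"
  shows "p_nae K N (M + m) \<ge> \<delta> ^ m * p_nae K N M
                 - (2 * \<delta>) ^ (M + 1) * exp (entropy \<delta> * real N + 0)"
proof -
  have le1: "\<And>e x. nae_He K e x \<le> 1" unfolding nae_He_def by simp
  have ne: "hyperedges N K \<times> ({0..<K} \<rightarrow>\<^sub>E {0..<2::nat}) \<noteq> {}"
    using hyp_ne[OF N] by (auto simp: PiE_eq_empty_iff)
  have fin: "finite (hyperedges N K \<times> ({0..<K} \<rightarrow>\<^sub>E {0..<2::nat}))" using hyp_fin[of N K] by (simp add: finite_PiE)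
  have st: "p_nae K N (M+m) \<ge> \<delta>^m * p_nae K N M
      - real (card (satset (hyperedges N K \<times> ({0..<K} \<rightarrow>\<^sub>E {0..<2::nat})) (nae_He K) {} M)) / real (card (hyperedges N K \<times> ({0..<K} \<rightarrow>\<^sub>E {0..<2::nat}))) ^ M"
    unfolding p_nae_def
    by (rule pM_step[OF fin ne le1]) (use K d0 d1 nae_good[OF K d1] in auto)
  have t0: "(2 * \<delta>) ^ (M + 1) * exp (entropy \<delta> * real N + 0) \<ge> 0" using d0 by simp
  have z: "real (card (satset (hyperedges N K \<times> ({0..<K} \<rightarrow>\<^sub>E {0..<2::nat})) (nae_He K) {} M)) = 0"
    by (simp add: satset_empty)
  then have z': "real (card (satset (hyperedges N K \<times> ({0..<K} \<rightarrow>\<^sub>E {0..<2::nat})) (nae_He K) {} M)) / real (card (hyperedges N K \<times> ({0..<K} \<rightarrow>\<^sub>E {0..<2::nat}))) ^ M = 0"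
    by simp
  show ?thesis using st t0 z' by linarith
qed

theorem lemma3:
  fixes q K :: nat and \<delta> :: real
  assumes "q \<ge> 2" and "K \<ge> 2" and "0 < \<delta>" and "\<delta> < 1/2"
  shows "(\<exists>e :: nat \<Rightarrow> real. e \<in> o(\<lambda>N. real N) \<and>
           (\<forall>N M m. 0 < N \<longrightarrow> 0 < M \<longrightarrow> 0 < m \<longrightarrow>
              p_col q N (M + m) \<ge> \<delta> ^ m * p_col q N M
                 - (2 * \<delta>) ^ (M + 1) * exp (entropy \<delta> * real N + e N)))
       \<and> (\<exists>e :: nat \<Rightarrow> real. e \<in> o(\<lambda>N. real N) \<and>
           (\<forall>N M m. 0 < N \<longrightarrow> 0 < M \<longrightarrow> 0 < m \<longrightarrow>
              p_sat K N (M + m) \<ge> \<delta> ^ m * p_sat K N M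
                 - (2 * \<delta>) ^ (M + 1) * exp (entropy \<delta> * real N + e N)))
       \<and> (\<exists>e :: nat \<Rightarrow> real. e \<in> o(\<lambda>N. real N) \<and>
           (\<forall>N M m. 0 < N \<longrightarrow> 0 < M \<longrightarrow> 0 < m \<longrightarrow>
              p_nae K N (M + m) \<ge> \<delta> ^ m * p_nae K N M
                 - (2 * \<delta>) ^ (M + 1) * exp (entropy \<delta> * real N + e N)))"
proof (intro conjI)
  show "\<exists>e :: nat \<Rightarrow> real. e \<in> o(\<lambda>N. real N) \<and>
           (\<forall>N M m. 0 < N \<longrightarrow> 0 < M \<longrightarrow> 0 < m \<longrightarrow>
              p_col q N (M + m) \<ge> \<delta> ^ m * p_col q N M
                 - (2 * \<delta>) ^ (M + 1) * exp (entropy \<delta> * real N + e N))"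
    using const_smallo[of "- ln (2*\<delta>)"] col_part[OF assms(1,3,4)] by blast
  show "\<exists>e :: nat \<Rightarrow> real. e \<in> o(\<lambda>N. real N) \<and>
           (\<forall>N M m. 0 < N \<longrightarrow> 0 < M \<longrightarrow> 0 < m \<longrightarrow>
              p_sat K N (M + m) \<ge> \<delta> ^ m * p_sat K N M
                 - (2 * \<delta>) ^ (M + 1) * exp (entropy \<delta> * real N + e N))"
    using const_smallo[of 0] sat_part[OF assms(2,3,4)] by blast
  show "\<exists>e :: nat \<Rightarrow> real. e \<in> o(\<lambda>N. real N) \<and>
           (\<forall>N M m. 0 < N \<longrightarrow> 0 < M \<longrightarrow> 0 < m \<longrightarrow>
              p_nae K N (M + m) \<ge> \<delta> ^ m * p_nae K N M
                 - (2 * \<delta>) ^ (M + 1) * exp (entropy \<delta> * real N + e N))"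
    using const_smallo[of 0] nae_part[OF assms(2,3,4)] by blast
qed

end
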